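(* Let $k\geq 1$ and let $T$ be a $2k$-strong tournament such that for every two distinct vertices $x,y$ of $T$ there is a path of length 2 between $x$ and $y$ (i.e. a vertex $z$ with $x\to z\to y$ or $y\to z\to x$). Then $T$ is $(k+2)^{*}$-weakly connected.
   Context: A tournament is a digraph in which each pair of distinct vertices is joined by exactly one arc; $a\to b$ means $a$ dominates $b$ (i.e. $ab$ is an arc). A digraph is $m$-strong if it has more than $m$ vertices and remains strongly connected after deleting any set of fewer than $m$ vertices. For distinct vertices $u,v$ of a digraph $D$, a weak $k^{*}$-container between $u$ and $v$ is a set of $k$ internally disjoint paths, each of which is either a $(u,v)$-path or a $(v,u)$-path (different paths may have different directions), whose union contains every vertex of $D$. $D$ is $k^{*}$-weakly connected if there is a weak $k^{*}$-container between every two distinct vertices of $D$. *)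

theory Defs
  imports Main
begin

text \<open>A digraph is given by a vertex set V and an arc relation A (A a b means a dominates b).\<close>

definition tournament :: "'a set \<Rightarrow> ('a \<Rightarrow> 'a \<Rightarrow> bool) \<Rightarrow> bool" where
  "tournament V A \<longleftrightarrow> finite V \<and> (\<forall>x y. A x y \<longrightarrow> x \<in> V \<and> y \<in> V)
     \<and> (\<forall>x\<in>V. \<not> A x x)
     \<and> (\<forall>x\<in>V. \<forall>y\<in>V. x \<noteq> y \<longrightarrow> (A x y \<longleftrightarrow> \<not> A y x))"

definition strongly_connected :: "'a set \<Rightarrow> ('a \<Rightarrow> 'a \<Rightarrow> bool) \<Rightarrow> bool" where
  "strongly_connected W A \<longleftrightarrow>
     (\<forall>x\<in>W. \<forall>y\<in>W. (\<lambda>a b. A a b \<and> a \<in> W \<and> b \<in> W)\<^sup>*\<^sup>* x y)"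

definition m_strong :: "nat \<Rightarrow> 'a set \<Rightarrow> ('a \<Rightarrow> 'a \<Rightarrow> bool) \<Rightarrow> bool" where
  "m_strong m V A \<longleftrightarrow> card V > m \<and>
     (\<forall>S. S \<subseteq> V \<and> card S < m \<longrightarrow> strongly_connected (V - S) A)"

definition is_path :: "'a set \<Rightarrow> ('a \<Rightarrow> 'a \<Rightarrow> bool) \<Rightarrow> 'a list \<Rightarrow> 'a \<Rightarrow> 'a \<Rightarrow> bool" where
  "is_path V A p u v \<longleftrightarrow> p \<noteq> [] \<and> distinct p \<and> hd p = u \<and> last p = v \<and> set p \<subseteq> V
     \<and> (\<forall>i. Suc i < length p \<longrightarrow> A (p ! i) (p ! Suc i))"

definition weak_container :: "'a set \<Rightarrow> ('a \<Rightarrow> 'a \<Rightarrow> bool) \<Rightarrow> nat \<Rightarrow> 'a \<Rightarrow> 'a \<Rightarrow> bool" where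
  "weak_container V A k u v \<longleftrightarrow> (\<exists>Ps :: 'a list list.
     length Ps = k \<and> distinct Ps
     \<and> (\<forall>p\<in>set Ps. is_path V A p u v \<or> is_path V A p v u)
     \<and> (\<forall>i<k. \<forall>j<k. i \<noteq> j \<longrightarrow> (set (Ps ! i) - {u, v}) \<inter> (set (Ps ! j) - {u, v}) = {})
     \<and> (\<Union>p\<in>set Ps. set p) = V)"

definition k_star_weakly_connected :: "nat \<Rightarrow> 'a set \<Rightarrow> ('a \<Rightarrow> 'a \<Rightarrow> bool) \<Rightarrow> bool" where
  "k_star_weakly_connected k V A \<longleftrightarrow>
     (\<forall>u\<in>V. \<forall>v\<in>V. u \<noteq> v \<longrightarrow> weak_container V A k u v)"

end

theory Submission
  imports Defs
begin


lemma succ_nth: "(\<forall>i. Suc i < length p \<longrightarrow> A (p ! i) (p ! Suc i)) \<longleftrightarrow> successively A p"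
proof (induction p)
  case Nil then show ?case by simp
next
  case (Cons a p)
  show ?case
  proof (cases p)
    case Nil then show ?thesis by simp
  next
    case (Cons b p')
    have "(\<forall>i. Suc i < length (a#p) \<longrightarrow> A ((a#p) ! i) ((a#p) ! Suc i)) \<longleftrightarrow>
          A a b \<and> (\<forall>i. Suc i < length p \<longrightarrow> A (p ! i) (p ! Suc i))"
      using Cons by (auto simp: nth_Cons split: nat.splits)
    then show ?thesis using Cons.IH Cons by simp
  qed
qed

lemma is_path_alt: "is_path V A p u v \<longleftrightarrow> p \<noteq> [] \<and> distinct p \<and> hd p = u \<and> last p = v \<and> set p \<subseteq> V
     \<and> successively A p"
  unfolding is_path_def succ_nth ..

lemma walk_path:
  assumes "(\<lambda>a b. A a b \<and> a \<in> U \<and> b \<in> U)\<^sup>*\<^sup>* x y" "x \<in> U"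
  shows "\<exists>p. is_path U A p x y"
  using assms
proof (induction rule: rtranclp_induct)
  case base
  then show ?case by (intro exI[of _ "[x]"]) (simp add: is_path_alt)
next
  case (step y z)
  then obtain p where p: "is_path U A p x y" by auto
  show ?case
  proof (cases "z \<in> set p")
    case True
    then obtain xs ys where xs: "p = xs @ z # ys" by (meson split_list)
    have "is_path U A (xs @ [z]) x z"
      using p xs unfolding is_path_alt
      by (auto simp: successively_append_iff hd_append split: if_splits)
    then show ?thesis by blast
  next
    case False
    have "is_path U A (p @ [z]) x z"
      using p False step(2) unfolding is_path_alt
      by (auto simp: successively_append_iff hd_append)
    then show ?thesis by blast
  qed
qed

lemma crossing:
  assumes "R\<^sup>*\<^sup>* x y" "P x" "\<not> P y"
  shows "\<exists>a b. R a b \<and> P a \<and> \<not> P b"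
  using assms by (induction rule: rtranclp_induct) auto



lemma tour_irr: "tournament V A \<Longrightarrow> \<not> A x x"
  unfolding tournament_def by blast
lemma tour_anti: "tournament V A \<Longrightarrow> A x y \<Longrightarrow> \<not> A y x"
  unfolding tournament_def by metis
lemma tour_tot: "tournament V A \<Longrightarrow> x \<in> V \<Longrightarrow> y \<in> V \<Longrightarrow> x \<noteq> y \<Longrightarrow> A x y \<or> A y x"
  unfolding tournament_def by blast
lemma tour_V: "tournament V A \<Longrightarrow> A x y \<Longrightarrow> x \<in> V \<and> y \<in> V"
  unfolding tournament_def by blast

lemma ins1:
  assumes "\<forall>z\<in>set p. A z x \<or> A x z" "\<forall>z\<in>set p. \<not> (A z x \<and> A x z)"
    "p \<noteq> []" "A (hd p) x" "y \<in> set p" "A x y"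
  shows "\<exists>xs a b ys. p = xs @ a # b # ys \<and> A a x \<and> A x b"
  using assms
proof (induction p)
  case Nil then show ?case by simp
next
  case (Cons c p)
  have "y \<noteq> c" using Cons.prems by auto
  then have y: "y \<in> set p" using Cons.prems by auto
  then have pn: "p \<noteq> []" by auto
  show ?case
  proof (cases "A x (hd p)")
    case True
    then show ?thesis using Cons.prems pn
      by (intro exI[of _ "[]"] exI[of _ c] exI[of _ "hd p"] exI[of _ "tl p"]) auto
  next
    case False
    then have "A (hd p) x" using Cons.prems(1) pn by (cases p) auto
    then obtain xs a b ys where "p = xs @ a # b # ys \<and> A a x \<and> A x b"
      using Cons.IH Cons.prems y pn by auto
    then show ?thesis by (intro exI[of _ "c # xs"]) auto
  qed
qed

lemma ins2:
  assumes "\<forall>z\<in>set p. A z x \<or> A x z" "\<forall>z\<in>set p. \<not> (A z x \<and> A x z)"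
    "p \<noteq> []" "A x (last p)" "y \<in> set p" "A y x"
  shows "\<exists>xs a b ys. p = xs @ a # b # ys \<and> A a x \<and> A x b"
proof -
  have "\<exists>xs a b ys. rev p = xs @ a # b # ys \<and> (\<lambda>a b. A b a) a x \<and> (\<lambda>a b. A b a) x b"
    by (rule ins1[where y=y]) (use assms in \<open>auto simp: hd_rev\<close>)
  then obtain xs a b ys where "rev p = xs @ a # b # ys" "A x a" "A b x" by blast
  then have "p = rev ys @ b # a # rev xs" by (metis append.assoc append_Cons append_Nil rev.simps(2) rev_append rev_rev_ident)
  then show ?thesis using \<open>A x a\<close> \<open>A b x\<close> by blast
qed

lemma insert_path:
  assumes "is_path U A (xs @ a # b # ys) s t" "x \<in> U" "x \<notin> set (xs @ a # b # ys)" "A a x" "A x b"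
  shows "is_path U A (xs @ a # x # b # ys) s t"
  using assms unfolding is_path_alt
  by (auto simp: successively_append_iff hd_append)

lemma replace_path:
  assumes "is_path U A p s t" "length p \<ge> 3" "b \<in> U" "a \<in> U" "b \<notin> set p" "a \<notin> set p" "b \<noteq> a"
    "\<forall>c\<in>set p. A c b" "\<forall>c\<in>set p. A a c" "A b a"
  shows "\<exists>w p'. w \<in> set p \<and> w \<noteq> s \<and> w \<noteq> t \<and> is_path U A p' s t \<and> set p' = insert b (insert a (set p - {w}))"
proof -
  obtain w1 w2 w3 r where p: "p = w1 # w2 # w3 # r" using assms(2)
    by (metis One_nat_def Suc_1 assms(2) eval_nat_numeral(3) le_Suc_eq length_0_conv length_Cons list.exhaust not_less_eq_eq numeral_le_one_iff semiring_norm(70))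
  let ?p = "w1 # b # a # w3 # r"
  have "is_path U A ?p s t" using assms p unfolding is_path_alt by auto
  moreover have "w2 \<noteq> s" "w2 \<noteq> t" using assms(1) p unfolding is_path_alt by (auto simp: last_ConsR split: if_splits)
  moreover have "set ?p = insert b (insert a (set p - {w2}))" using assms(1) p unfolding is_path_alt by auto
  ultimately show ?thesis using p by (intro exI[of _ w2] exI[of _ ?p]) auto
qed



lemma path_len2:
  assumes "is_path U A p s t" "length p \<le> 2" "s \<noteq> t"
  shows "p = [s, t]"
proof -
  have "p \<noteq> []" "hd p = s" "last p = t" using assms unfolding is_path_alt by auto
  then show ?thesis using assms(2,3)
    by (cases p; cases "tl p"; auto)
qed

lemma camion_step:
  assumes T: "tournament V A" and UV: "U \<subseteq> V" and SC: "strongly_connected U A"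
    and uv: "A u v" "u \<noteq> v"
    and P: "is_path U A p u v" and Q: "is_path U A q v u" and I: "set p \<inter> set q = {u, v}"
    and N: "set p \<union> set q \<noteq> U"
  shows "\<exists>p' q'. is_path U A p' u v \<and> is_path U A q' v u \<and> set p' \<inter> set q' = {u, v}
      \<and> card (set p \<union> set q) < card (set p' \<union> set q')"
proof -
  define C where "C = set p \<union> set q"
  have finU: "finite U" using T UV unfolding tournament_def by (meson finite_subset)
  have CU: "C \<subseteq> U" using P Q unfolding C_def is_path_alt by auto
  have uC: "u \<in> C" "v \<in> C" using I unfolding C_def by auto
  have tot: "\<And>x y. x \<in> U \<Longrightarrow> y \<in> U \<Longrightarrow> x \<noteq> y \<Longrightarrow> A x y \<or> A y x"
    using tour_tot[OF T] UV by blast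
  have anti: "\<And>x y. A x y \<Longrightarrow> \<not> A y x" using tour_anti[OF T] by blast
  have irr: "\<And>x. \<not> A x x" using tour_irr[OF T] by blast
  have pne: "p \<noteq> []" "hd p = u" "last p = v" "distinct p" using P unfolding is_path_alt by auto
  have qne: "q \<noteq> []" "hd q = v" "last q = u" "distinct q" using Q unfolding is_path_alt by auto
  show ?thesis
  proof (cases "\<exists>x\<in>U - C. \<exists>xs a b ys. p = xs @ a # b # ys \<and> A a x \<and> A x b")
    case True
    then obtain x xs a b ys where x: "x \<in> U - C" "p = xs @ a # b # ys" "A a x" "A x b" by blast
    let ?p = "xs @ a # x # b # ys"
    have "is_path U A ?p u v" using insert_path[of U A xs a b ys u v x] P x unfolding C_def by auto
    moreover have "set ?p \<inter> set q = {u, v}" using I x unfolding C_def by auto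
    moreover have "card (set p \<union> set q) < card (set ?p \<union> set q)"
    proof -
      have "set ?p \<union> set q = insert x C" using x unfolding C_def by auto
      then show ?thesis using x finU CU unfolding C_def by (simp add: finite_subset)
    qed
    ultimately show ?thesis using Q by blast
  next
    case noP: False
    show ?thesis
    proof (cases "\<exists>x\<in>U - C. \<exists>xs a b ys. q = xs @ a # b # ys \<and> A a x \<and> A x b")
      case True
      then obtain x xs a b ys where x: "x \<in> U - C" "q = xs @ a # b # ys" "A a x" "A x b" by blast
      let ?q = "xs @ a # x # b # ys"
      have "is_path U A ?q v u" using insert_path[of U A xs a b ys v u x] Q x unfolding C_def by auto
      moreover have "set p \<inter> set ?q = {u, v}" using I x unfolding C_def by auto
      moreover have "card (set p \<union> set q) < card (set p \<union> set ?q)"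
      proof -
        have "set p \<union> set ?q = insert x C" using x unfolding C_def by auto
        then show ?thesis using x finU CU unfolding C_def by (simp add: finite_subset)
      qed
      ultimately show ?thesis using P by blast
    next
      case noQ: False
      have dich: "(\<forall>c\<in>C. A c x) \<or> (\<forall>c\<in>C. A x c)" if x: "x \<in> U - C" for x
      proof -
        have xU: "x \<in> U" and xp: "x \<notin> set p" and xq: "x \<notin> set q" using x unfolding C_def by auto
        have totp: "\<forall>z\<in>set p. A z x \<or> A x z" using tot xU xp P unfolding is_path_alt by blast
        have totq: "\<forall>z\<in>set q. A z x \<or> A x z" using tot xU xq Q unfolding is_path_alt by blast
        have antp: "\<forall>z\<in>set p. \<not> (A z x \<and> A x z)" "\<forall>z\<in>set q. \<not> (A z x \<and> A x z)" using anti by blast+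
        have "u \<in> U" using CU uC by auto
        have "x \<noteq> u" using x uC by auto
        then have "A u x \<or> A x u" using tot \<open>u \<in> U\<close> xU by blast
        then show ?thesis
        proof
          assume ux: "A u x"
          have allp: "\<forall>y\<in>set p. A y x"
          proof (rule ccontr)
            assume "\<not> (\<forall>y\<in>set p. A y x)"
            then obtain y where "y \<in> set p" "\<not> A y x" by blast
            then have "A x y" using totp by blast
            then have "\<exists>xs a b ys. p = xs @ a # b # ys \<and> A a x \<and> A x b"
              using ins1[OF totp antp(1) pne(1), of y] ux pne \<open>y \<in> set p\<close> by auto
            then show False using noP x by blast
          qed
          then have "A v x" using pne by (metis last_in_set)
          have allq: "\<forall>y\<in>set q. A y x"
          proof (rule ccontr)
            assume "\<not> (\<forall>y\<in>set q. A y x)"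
            then obtain y where "y \<in> set q" "\<not> A y x" by blast
            then have "A x y" using totq by blast
            then have "\<exists>xs a b ys. q = xs @ a # b # ys \<and> A a x \<and> A x b"
              using ins1[OF totq antp(2) qne(1), of y] \<open>A v x\<close> qne \<open>y \<in> set q\<close> by auto
            then show False using noQ x by blast
          qed
          show ?thesis using allp allq unfolding C_def by blast
        next
          assume xu: "A x u"
          have allq: "\<forall>y\<in>set q. A x y"
          proof (rule ccontr)
            assume "\<not> (\<forall>y\<in>set q. A x y)"
            then obtain y where "y \<in> set q" "\<not> A x y" by blast
            then have "A y x" using totq by blast
            then have "\<exists>xs a b ys. q = xs @ a # b # ys \<and> A a x \<and> A x b"
              using ins2[OF totq antp(2) qne(1), of y] xu qne \<open>y \<in> set q\<close> by auto
            then show False using noQ x by blast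
          qed
          then have "A x v" using qne by (metis hd_in_set)
          have allp: "\<forall>y\<in>set p. A x y"
          proof (rule ccontr)
            assume "\<not> (\<forall>y\<in>set p. A x y)"
            then obtain y where "y \<in> set p" "\<not> A x y" by blast
            then have "A y x" using totp by blast
            then have "\<exists>xs a b ys. p = xs @ a # b # ys \<and> A a x \<and> A x b"
              using ins2[OF totp antp(1) pne(1), of y] \<open>A x v\<close> pne \<open>y \<in> set p\<close> by auto
            then show False using noP x by blast
          qed
          show ?thesis using allp allq unfolding C_def by blast
        qed
      qed
      let ?R = "\<lambda>a b. A a b \<and> a \<in> U \<and> b \<in> U"
      obtain y where y: "y \<in> U - C" using N CU unfolding C_def by blast
      have uU: "u \<in> U" using CU uC by auto
      have "?R\<^sup>*\<^sup>* u y" using SC uU y unfolding strongly_connected_def by blast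
      then obtain c z where cz: "?R c z" "c \<in> C" "z \<notin> C"
        using crossing[of ?R u y "\<lambda>w. w \<in> C"] uC y by blast
      have zin: "\<forall>c\<in>C. A c z" using dich[of z] cz anti by blast
      have "?R\<^sup>*\<^sup>* z u" using SC uU cz unfolding strongly_connected_def by blast
      then obtain b a where ba: "?R b a" "\<forall>c\<in>C. A c b" "\<not> (\<forall>c\<in>C. A c a)"
        using crossing[of ?R z u "\<lambda>w. \<forall>c\<in>C. A c w"] zin uC irr by blast
      have bC: "b \<notin> C" using ba irr by blast
      have aC: "a \<notin> C" using ba anti by blast
      have aout: "\<forall>c\<in>C. A a c" using dich[of a] ba aC by blast
      have ab: "b \<noteq> a" using ba irr by blast
      have "length p \<ge> 3 \<or> length q \<ge> 3"
      proof (rule ccontr)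
        assume "\<not> ?thesis"
        then have "p = [u, v]" "q = [v, u]" using path_len2[OF P] path_len2[OF Q] uv by auto
        then have "A v u" using Q unfolding is_path_alt by simp
        then show False using uv anti by blast
      qed
      then show ?thesis
      proof
        assume lp: "length p \<ge> 3"
        obtain w p' where w: "w \<in> set p" "w \<noteq> u" "w \<noteq> v" "is_path U A p' u v"
          "set p' = insert b (insert a (set p - {w}))"
          using replace_path[OF P lp, of b a] ba bC aC ab aout unfolding C_def by auto
        have wq: "w \<notin> set q" using w I by auto
        have "set p' \<inter> set q = {u, v}" using w I bC aC unfolding C_def by auto
        moreover have "card (set p \<union> set q) < card (set p' \<union> set q)"
        proof -
          have "set p' \<union> set q = insert b (insert a (C - {w}))" using w wq unfolding C_def by auto
          moreover have "finite C" using CU finU finite_subset by auto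
          moreover have "w \<in> C" using w unfolding C_def by auto
          ultimately show ?thesis using bC aC ab unfolding C_def
            by (simp add: card_Diff_singleton)
        qed
        ultimately show ?thesis using w Q by blast
      next
        assume lq: "length q \<ge> 3"
        obtain w q' where w: "w \<in> set q" "w \<noteq> v" "w \<noteq> u" "is_path U A q' v u"
          "set q' = insert b (insert a (set q - {w}))"
          using replace_path[OF Q lq, of b a] ba bC aC ab aout unfolding C_def by auto
        have wp: "w \<notin> set p" using w I by auto
        have "set p \<inter> set q' = {u, v}" using w I bC aC unfolding C_def by auto
        moreover have "card (set p \<union> set q) < card (set p \<union> set q')"
        proof -
          have "set p \<union> set q' = insert b (insert a (C - {w}))" using w wp unfolding C_def by auto
          moreover have "finite C" using CU finU finite_subset by auto
          moreover have "w \<in> C" using w unfolding C_def by auto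
          ultimately show ?thesis using bC aC ab unfolding C_def
            by (simp add: card_Diff_singleton)
        qed
        ultimately show ?thesis using w P by blast
      qed
    qed
  qed
qed

lemma camion:
  assumes T: "tournament V A" and UV: "U \<subseteq> V" and SC: "strongly_connected U A"
    and uv: "A u v" "u \<noteq> v" "u \<in> U" "v \<in> U"
  shows "\<exists>p q. is_path U A p u v \<and> is_path U A q v u \<and> set p \<inter> set q = {u, v}
      \<and> set p \<union> set q = U"
proof -
  have finU: "finite U" using T UV unfolding tournament_def by (meson finite_subset)
  have main: "\<And>p q. card U - card (set p \<union> set q) = n \<Longrightarrow> is_path U A p u v \<Longrightarrow> is_path U A q v u
     \<Longrightarrow> set p \<inter> set q = {u, v} \<Longrightarrow> \<exists>p q. is_path U A p u v \<and> is_path U A q v u \<and> set p \<inter> set q = {u, v}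
      \<and> set p \<union> set q = U" for n
  proof (induction n rule: less_induct)
    case (less n p q)
    show ?case
    proof (cases "set p \<union> set q = U")
      case True then show ?thesis using less by blast
    next
      case False
      then obtain p' q' where pq: "is_path U A p' u v" "is_path U A q' v u" "set p' \<inter> set q' = {u, v}"
        "card (set p \<union> set q) < card (set p' \<union> set q')"
        using camion_step[OF T UV SC uv(1,2) less(3,4,5)] by blast
      have "set p' \<union> set q' \<subseteq> U" using pq unfolding is_path_alt by auto
      then have "card (set p' \<union> set q') \<le> card U" using finU card_mono by blast
      then have "card U - card (set p' \<union> set q') < n" using less(2) pq(4) by linarith
      then show ?thesis using less(1) pq by blast
    qed
  qed
  have "(\<lambda>a b. A a b \<and> a \<in> U \<and> b \<in> U)\<^sup>*\<^sup>* v u" using SC uv unfolding strongly_connected_def by blast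
  then have "\<exists>q. is_path U A q v u" using uv(4) by (rule walk_path)
  then obtain q where q: "is_path U A q v u" by blast
  have p: "is_path U A [u, v] u v" using uv unfolding is_path_alt by auto
  have "u \<in> set q" "v \<in> set q" using q unfolding is_path_alt by (metis last_in_set, metis hd_in_set)
  then have "set [u, v] \<inter> set q = {u, v}" by auto
  then show ?thesis using main[OF refl p q] by blast
qed



lemma pairs_exist:
  assumes T: "tournament V A" and MS: "m_strong (2 * k) V A"
    and uv: "u \<in> V" "v \<in> V" "u \<noteq> v" "A u v"
    and X12: "X12 = {z\<in>V. (A u z \<and> A z v) \<or> (A v z \<and> A z u)}"
    and X3: "X3 = {z\<in>V. A u z \<and> A v z}" and X4: "X4 = {z\<in>V. A z u \<and> A z v}"
    and tk: "0 < t \<Longrightarrow> card X12 + 2 * t \<le> 2 * k"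
  shows "t' \<le> t \<Longrightarrow> \<exists>prs. length prs = t' \<and> distinct (map fst prs) \<and> distinct (map snd prs)
      \<and> (\<forall>(x,y)\<in>set prs. x \<in> X3 \<and> y \<in> X4 \<and> A x y)"
proof (induction t')
  case 0 then show ?case by auto
next
  case (Suc t')
  then obtain prs where prs: "length prs = t'" "distinct (map fst prs)" "distinct (map snd prs)"
    "\<forall>(x,y)\<in>set prs. x \<in> X3 \<and> y \<in> X4 \<and> A x y" by auto
  have anti: "\<And>x y. A x y \<Longrightarrow> \<not> A y x" using tour_anti[OF T] by blast
  have irr: "\<And>x. \<not> A x x" using tour_irr[OF T] by blast
  have tot: "\<And>x y. x \<in> V \<Longrightarrow> y \<in> V \<Longrightarrow> x \<noteq> y \<Longrightarrow> A x y \<or> A y x" using tour_tot[OF T] by blast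
  have AV: "\<And>x y. A x y \<Longrightarrow> x \<in> V \<and> y \<in> V" using tour_V[OF T] by blast
  define S where "S = X12 \<union> set (map fst prs) \<union> set (map snd prs)"
  have SV: "S \<subseteq> V" using prs(4) unfolding S_def X12 X3 X4 by auto
  have "card S \<le> card X12 + card (set (map fst prs)) + card (set (map snd prs))"
    unfolding S_def by (meson card_Un_le add_le_mono le_trans order_refl)
  also have "\<dots> \<le> card X12 + t' + t'" using card_length[of "map fst prs"] card_length[of "map snd prs"] prs by auto
  moreover have "card X12 + 2 * t \<le> 2 * k" using tk Suc.prems by auto
  ultimately have "card S < 2 * k" using Suc.prems by linarith
  then have SC: "strongly_connected (V - S) A" using MS SV unfolding m_strong_def by blast
  have uS: "u \<notin> S" "v \<notin> S" using prs(4) irr unfolding S_def X12 X3 X4 by auto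
  let ?R = "\<lambda>a b. A a b \<and> a \<in> V - S \<and> b \<in> V - S"
  have "?R\<^sup>*\<^sup>* v u" using SC uS uv unfolding strongly_connected_def by blast
  then obtain x y where xy: "?R x y" "x = v \<or> x \<in> X3" "\<not> (y = v \<or> y \<in> X3)"
    using crossing[of ?R v u "\<lambda>w. w = v \<or> w \<in> X3"] uv irr unfolding X3 by blast
  have xX3: "x \<in> X3"
  proof (rule ccontr)
    assume "x \<notin> X3"
    then have xv: "x = v" using xy by blast
    have "y \<noteq> u" using xy xv uv anti by blast
    then have "A u y \<or> A y u" using tot uv xy by blast
    then show False
    proof
      assume "A u y" then show False using xy xv AV unfolding X3 by blast
    next
      assume "A y u" then have "y \<in> X12" using xy xv AV unfolding X12 by blast
      then show False using xy unfolding S_def by blast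
    qed
  qed
  have yX4: "y \<in> X4"
  proof -
    have yu: "y \<noteq> u" using xy xX3 anti unfolding X3 by blast
    have yv: "y \<noteq> v" using xy by blast
    have y12: "y \<notin> X12" using xy unfolding S_def by blast
    have yV: "y \<in> V" using xy by blast
    have "A y u"
    proof (rule ccontr)
      assume "\<not> A y u"
      then have "A u y" using tot uv yV yu by blast
      moreover have "A v y \<or> A y v" using tot uv yV yv by blast
      ultimately show False using xy y12 yV unfolding X12 X3 by blast
    qed
    moreover have "A y v"
    proof (rule ccontr)
      assume "\<not> A y v"
      then have "A v y" using tot uv yV yv by blast
      then show False using \<open>A y u\<close> y12 yV unfolding X12 by blast
    qed
    ultimately show ?thesis using yV unfolding X4 by blast
  qed
  have "x \<notin> set (map fst prs)" "y \<notin> set (map snd prs)" using xy unfolding S_def by auto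
  then show ?case using prs xX3 yX4 xy
    by (intro exI[of _ "(x, y) # prs"]) auto
qed



lemma idx_disj:
  assumes "distinct Ps" "\<forall>a\<in>set Ps. \<forall>b\<in>set Ps. a \<noteq> b \<longrightarrow> F a \<inter> F b = {}"
  shows "\<forall>i<length Ps. \<forall>j<length Ps. i \<noteq> j \<longrightarrow> F (Ps ! i) \<inter> F (Ps ! j) = {}"
  using assms by (metis nth_eq_iff_index_eq nth_mem)

lemma main_dir:
  assumes k1: "k \<ge> 1" and T: "tournament V A" and MS: "m_strong (2 * k) V A"
    and cond: "\<forall>x\<in>V. \<forall>y\<in>V. x \<noteq> y \<longrightarrow> (\<exists>z\<in>V. (A x z \<and> A z y) \<or> (A y z \<and> A z x))"
    and uv: "u \<in> V" "v \<in> V" "u \<noteq> v" "A u v"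
  shows "weak_container V A (k + 2) u v"
proof -
  have anti: "\<And>x y. A x y \<Longrightarrow> \<not> A y x" using tour_anti[OF T] by blast
  have irr: "\<And>x. \<not> A x x" using tour_irr[OF T] by blast
  have tot: "\<And>x y. x \<in> V \<Longrightarrow> y \<in> V \<Longrightarrow> x \<noteq> y \<Longrightarrow> A x y \<or> A y x" using tour_tot[OF T] by blast
  have AV: "\<And>x y. A x y \<Longrightarrow> x \<in> V \<and> y \<in> V" using tour_V[OF T] by blast
  have finV: "finite V" using T unfolding tournament_def by blast
  define X12 where "X12 = {z\<in>V. (A u z \<and> A z v) \<or> (A v z \<and> A z u)}"
  define X3 where "X3 = {z\<in>V. A u z \<and> A v z}"
  define X4 where "X4 = {z\<in>V. A z u \<and> A z v}"
  have "X12 \<noteq> {}" using cond uv unfolding X12_def by blast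
  then have s1: "card X12 \<ge> 1" using finV unfolding X12_def
    by (metis (no_types, lifting) One_nat_def Suc_leI card_gt_0_iff finite_subset mem_Collect_eq subsetI)
  define m where "m = min (card X12) k"
  have "m \<le> card X12" unfolding m_def by simp
  then obtain D where D: "D \<subseteq> X12" "card D = m" and finD: "finite D"
    by (rule obtain_subset_with_card_n)
  obtain ds where ds: "distinct ds" "set ds = D" using finite_distinct_list[OF finD] by blast
  define t where "t = k - m"
  have m1: "m \<ge> 1" "m \<le> k" using s1 k1 unfolding m_def by auto
  have tk: "0 < t \<Longrightarrow> card X12 + 2 * t \<le> 2 * k" unfolding t_def m_def by auto
  obtain prs where prs: "length prs = t" "distinct (map fst prs)" "distinct (map snd prs)"
      "\<forall>(x,y)\<in>set prs. x \<in> X3 \<and> y \<in> X4 \<and> A x y"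
    using pairs_exist[OF T MS uv X12_def X3_def X4_def tk, of t] by auto
  define I where "I = D \<union> fst ` set prs \<union> snd ` set prs"
  have IV: "I \<subseteq> V" using D prs(4) unfolding I_def X12_def X3_def X4_def by auto
  have "card I \<le> card D + card (fst ` set prs) + card (snd ` set prs)"
    unfolding I_def by (meson card_Un_le add_le_mono le_trans order_refl)
  also have "\<dots> \<le> m + t + t" using card_image_le[of "set prs" fst] card_image_le[of "set prs" snd]
      card_length[of prs] prs D by auto
  finally have "card I < 2 * k" using m1 unfolding t_def by linarith
  then have SC: "strongly_connected (V - I) A" using MS IV unfolding m_strong_def by blast
  have X12uv: "\<And>z. z \<in> X12 \<Longrightarrow> z \<noteq> u \<and> z \<noteq> v" unfolding X12_def using irr by blast
  have X3uv: "\<And>z. z \<in> X3 \<Longrightarrow> z \<noteq> u \<and> z \<noteq> v" unfolding X3_def using irr by blast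
  have X4uv: "\<And>z. z \<in> X4 \<Longrightarrow> z \<noteq> u \<and> z \<noteq> v" unfolding X4_def using irr by blast
  have uvI: "u \<notin> I" "v \<notin> I" using D X12uv X3uv X4uv prs(4) unfolding I_def by fastforce+
  obtain p q where pq: "is_path (V - I) A p u v" "is_path (V - I) A q v u" "set p \<inter> set q = {u, v}"
      "set p \<union> set q = V - I"
    using camion[OF T _ SC uv(4,3)] uvI uv by blast
  define f where "f = (\<lambda>z. if A u z then [u, z, v] else [v, z, u])"
  define g where "g = (\<lambda>(x::'a, y::'a). [u, x, y, v])"
  define Ps where "Ps = map f ds @ map g prs @ [p, q]"
  have "length ds = m" using distinct_card[OF ds(1)] ds(2) D(2) by simp
  then have len: "length Ps = k + 2" unfolding Ps_def using prs(1) m1 t_def by simp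
  have pathV: "\<And>r s t. is_path (V - I) A r s t \<Longrightarrow> is_path V A r s t" unfolding is_path_alt by auto
  have d123: "X12 \<inter> X3 = {}" "X12 \<inter> X4 = {}" "X3 \<inter> X4 = {}"
    unfolding X12_def X3_def X4_def using anti by blast+
  have fz: "(is_path V A (f z) u v \<or> is_path V A (f z) v u) \<and> set (f z) - {u, v} = {z} \<and> f z ! 1 = z"
    if "z \<in> X12" for z
    using that X12uv[OF that] uv anti unfolding X12_def f_def is_path_alt by auto
  have fzD: "(is_path V A (f z) u v \<or> is_path V A (f z) v u) \<and> set (f z) - {u, v} = {z} \<and> f z ! 1 = z"
    if "z \<in> D" for z using fz that D by blast
  have gxy: "is_path V A (g (x, y)) u v \<and> set (g (x, y)) - {u, v} = {x, y} \<and> g (x, y) ! 1 = x \<and> g (x, y) ! 2 = y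
      \<and> x \<in> X3 \<and> y \<in> X4"
    if "(x, y) \<in> set prs" for x y
  proof -
    have xy: "x \<in> X3" "y \<in> X4" "A x y" using prs(4) that by auto
    then have "x \<noteq> y" using irr by blast
    then show ?thesis using xy X3uv[OF xy(1)] X4uv[OF xy(2)] uv
      unfolding X3_def X4_def g_def is_path_alt by auto
  qed
  have injf: "inj_on f (set ds)" using fz ds D by (intro inj_onI) (metis subsetD)
  have distprs: "distinct prs" using prs(2) by (simp add: distinct_map)
  have injfst: "inj_on fst (set prs)" using prs(2) by (simp add: distinct_map)
  have injsnd: "inj_on snd (set prs)" using prs(3) by (simp add: distinct_map)
  have injg: "inj_on g (set prs)" unfolding g_def by (intro inj_onI) auto
  have fI: "\<And>z. z \<in> D \<Longrightarrow> \<not> set (f z) \<subseteq> V - I" unfolding f_def I_def by auto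
  have xI: "\<And>x y. (x, y) \<in> set prs \<Longrightarrow> x \<in> I" unfolding I_def by (metis UnI1 UnI2 fst_conv image_eqI)
  have yI: "\<And>x y. (x, y) \<in> set prs \<Longrightarrow> y \<in> I" unfolding I_def by (metis UnI2 snd_conv image_eqI)
  have gI: "\<And>x y. (x, y) \<in> set prs \<Longrightarrow> \<not> set (g (x, y)) \<subseteq> V - I" using xI unfolding g_def by auto
  have pI: "set p \<subseteq> V - I" "set q \<subseteq> V - I" using pq unfolding is_path_alt by auto
  have pneq: "p \<noteq> q" using pq uv unfolding is_path_alt by auto
  have fg: "f z \<noteq> g xy" if "z \<in> D" "xy \<in> set prs" for z xy
  proof
    assume eq: "f z = g xy"
    obtain x y where xy: "xy = (x, y)" by (cases xy)
    have "z = f z ! 1" using fzD[OF that(1)] by simp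
    also have "\<dots> = g (x, y) ! 1" using eq xy by simp
    also have "\<dots> = x" by (simp add: g_def)
    finally have zx: "z = x" .
    have "x \<in> X3" using gxy that(2) xy by blast
    moreover have "z \<in> X12" using that(1) D by blast
    ultimately show False using zx d123 by blast
  qed
  have dist: "distinct Ps"
    unfolding Ps_def using ds injf distprs injg fg fI gI pI pneq
    by (auto simp: distinct_map)
  have cases_Ps: "a \<in> set Ps \<Longrightarrow> (\<exists>z\<in>D. a = f z) \<or> (\<exists>x y. (x, y) \<in> set prs \<and> a = g (x, y)) \<or> a = p \<or> a = q"
    for a unfolding Ps_def using ds by auto
  have intSP: "set a - {u, v} \<subseteq> I" if "(\<exists>z\<in>D. a = f z) \<or> (\<exists>x y. (x, y) \<in> set prs \<and> a = g (x, y))" for a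
    using that
  proof
    assume "\<exists>z\<in>D. a = f z"
    then obtain z where z: "z \<in> D" "a = f z" by blast
    then have "z \<in> X12" using D by blast
    then have "set a - {u, v} = {z}" using fz z by blast
    then show ?thesis using z unfolding I_def by auto
  next
    assume "\<exists>x y. (x, y) \<in> set prs \<and> a = g (x, y)"
    then obtain x y where xy: "(x, y) \<in> set prs" "a = g (x, y)" by blast
    then show ?thesis using gxy[OF xy(1)] xI[OF xy(1)] yI[OF xy(1)] by auto
  qed
  have disj: "\<forall>a\<in>set Ps. \<forall>b\<in>set Ps. a \<noteq> b \<longrightarrow> (set a - {u, v}) \<inter> (set b - {u, v}) = {}"
  proof (intro ballI impI)
    fix a b assume a: "a \<in> set Ps" and b: "b \<in> set Ps" and ab: "a \<noteq> b"
    show "(set a - {u, v}) \<inter> (set b - {u, v}) = {}"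
    proof (cases "a = p \<or> a = q")
      case True
      show ?thesis
      proof (cases "b = p \<or> b = q")
        case True
        then show ?thesis using \<open>a = p \<or> a = q\<close> ab pq(3) by auto
      next
        case False
        then show ?thesis using True intSP[of b] cases_Ps[OF b] pI by auto
      qed
    next
      case aF: False
      show ?thesis
      proof (cases "b = p \<or> b = q")
        case True
        then show ?thesis using aF intSP[of a] cases_Ps[OF a] pI by auto
      next
        case bF: False
        have ca: "(\<exists>z\<in>D. a = f z) \<or> (\<exists>x y. (x, y) \<in> set prs \<and> a = g (x, y))" using aF cases_Ps[OF a] by blast
        have cb: "(\<exists>z\<in>D. b = f z) \<or> (\<exists>x y. (x, y) \<in> set prs \<and> b = g (x, y))" using bF cases_Ps[OF b] by blast
        show ?thesis
        proof (cases "\<exists>z\<in>D. a = f z")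
          case True
          then obtain z where z: "z \<in> D" "a = f z" by blast
          show ?thesis
          proof (cases "\<exists>z\<in>D. b = f z")
            case True
            then obtain z' where z': "z' \<in> D" "b = f z'" by blast
            then show ?thesis using z z' ab fzD[OF z(1)] fzD[OF z'(1)] by auto
          next
            case False
            then obtain x y where xy: "(x, y) \<in> set prs" "b = g (x, y)" using cb by blast
            then show ?thesis using z xy fzD[OF z(1)] gxy[OF xy(1)] D d123 by auto
          qed
        next
          case False
          then obtain x y where xy: "(x, y) \<in> set prs" "a = g (x, y)" using ca by blast
          show ?thesis
          proof (cases "\<exists>z\<in>D. b = f z")
            case True
            then obtain z where z: "z \<in> D" "b = f z" by blast
            then show ?thesis using z xy fzD[OF z(1)] gxy[OF xy(1)] D d123 by auto
          next
            case False
            then obtain x' y' where xy': "(x', y') \<in> set prs" "b = g (x', y')" using cb by blast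
            have "(x, y) \<noteq> (x', y')" using xy xy' ab by auto
            then have "x \<noteq> x'" "y \<noteq> y'" using injfst injsnd xy(1) xy'(1)
              by (metis fst_conv inj_onD snd_conv)+
            moreover have "x \<noteq> y'" "y \<noteq> x'" using gxy[OF xy(1)] gxy[OF xy'(1)] d123 by auto
            ultimately show ?thesis using gxy[OF xy(1)] gxy[OF xy'(1)] xy xy' by auto
          qed
        qed
      qed
    qed
  qed
  have paths: "\<forall>r\<in>set Ps. is_path V A r u v \<or> is_path V A r v u"
  proof
    fix r assume "r \<in> set Ps"
    then show "is_path V A r u v \<or> is_path V A r v u"
      using cases_Ps[of r] fz gxy D pathV pq by blast
  qed
  have union: "(\<Union>r\<in>set Ps. set r) = V"
  proof
    show "(\<Union>r\<in>set Ps. set r) \<subseteq> V" using paths unfolding is_path_alt by blast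
  next
    show "V \<subseteq> (\<Union>r\<in>set Ps. set r)"
    proof
      fix x assume xV: "x \<in> V"
      show "x \<in> (\<Union>r\<in>set Ps. set r)"
      proof (cases "x \<in> I")
        case False
        then have "x \<in> set p \<union> set q" using pq(4) xV by blast
        then show ?thesis unfolding Ps_def by auto
      next
        case True
        then consider "x \<in> D" | "x \<in> fst ` set prs" | "x \<in> snd ` set prs" unfolding I_def by blast
        then show ?thesis
        proof cases
          case 1 then show ?thesis unfolding Ps_def using ds f_def by (auto simp: f_def)
        next
          case 2 then obtain y where "(x, y) \<in> set prs" by force
          then show ?thesis unfolding Ps_def g_def by force
        next
          case 3 then obtain y where "(y, x) \<in> set prs" by force
          then show ?thesis unfolding Ps_def g_def by force
        qed
      qed
    qed
  qed
  show ?thesis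
    unfolding weak_container_def
  proof (intro exI[of _ Ps] conjI)
    show "length Ps = k + 2" by (rule len)
    show "distinct Ps" by (rule dist)
    show "\<forall>p\<in>set Ps. is_path V A p u v \<or> is_path V A p v u" by (rule paths)
    show "\<forall>i<k + 2. \<forall>j<k + 2. i \<noteq> j \<longrightarrow> (set (Ps ! i) - {u, v}) \<inter> (set (Ps ! j) - {u, v}) = {}"
      using idx_disj[OF dist disj] len by simp
    show "(\<Union>p\<in>set Ps. set p) = V" by (rule union)
  qed
qed


lemma wc_sym:
  assumes "weak_container V A k u v"
  shows "weak_container V A k v u"
proof -
  have e: "{v, u} = {u, v}" by blast
  show ?thesis using assms unfolding weak_container_def e by blast
qed

theorem proposition2p8:
  fixes V :: "'a set" and A :: "'a \<Rightarrow> 'a \<Rightarrow> bool" and k :: nat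
  assumes "k \<ge> 1"
    and "tournament V A"
    and "m_strong (2 * k) V A"
    and "\<forall>x\<in>V. \<forall>y\<in>V. x \<noteq> y \<longrightarrow>
           (\<exists>z\<in>V. (A x z \<and> A z y) \<or> (A y z \<and> A z x))"
  shows "k_star_weakly_connected (k + 2) V A"
  unfolding k_star_weakly_connected_def
proof (intro ballI impI)
  fix u v assume uv: "u \<in> V" "v \<in> V" "u \<noteq> v"
  then have "A u v \<or> A v u" using tour_tot[OF assms(2)] by blast
  then show "weak_container V A (k + 2) u v"
  proof
    assume "A u v"
    then show ?thesis using main_dir[OF assms] uv by blast
  next
    assume "A v u"
    then have "weak_container V A (k + 2) v u" using main_dir[OF assms] uv by blast
    then show ?thesis by (rule wc_sym)
  qed
qed

end
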